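(* Let $L\in\mathbb{R}^{n\times n}$ be the Laplacian of an undirected unweighted graph on $n$ nodes, let $s \in \mathbb{R}^n$ be a mean-zero innate opinion vector and $z = (I+L)^{-1}s$. Let $(u,v)$ be an edge of the graph, $E = \chi_{u,v}\chi_{u,v}^T$ its edge Laplacian, and $\delta = z(u)-z(v)$. Then $$PD(L-E) \ge PD(L) + \delta^2.$$
   Context: $\chi_{u,v}\in\mathbb{R}^n$ is the vector with $1$ in coordinate $u$, $-1$ in coordinate $v$ and $0$ elsewhere. Friedkin–Johnsen model: expressed opinions $z=(I+L)^{-1}s$. With $s$ fixed, the polarization+disagreement of a graph with Laplacian $M$ is $PD(M) = s^T (I+M)^{-1} s$. *)

theory Defs
  imports "HOL-Analysis.Analysis"
begin

definition simple_graph :: "('n::finite \<Rightarrow> 'n \<Rightarrow> bool) \<Rightarrow> bool" where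
  "simple_graph G \<longleftrightarrow> (\<forall>i j. G i j \<longrightarrow> G j i) \<and> (\<forall>i. \<not> G i i)"

definition laplacian :: "('n::finite \<Rightarrow> 'n \<Rightarrow> bool) \<Rightarrow> real^'n^'n" where
  "laplacian G = (\<chi> i j. if i = j then real (card {k. G i k}) else if G i j then -1 else 0)"

definition chi_vec :: "'n::finite \<Rightarrow> 'n \<Rightarrow> real^'n" where
  "chi_vec u v = (\<chi> i. (if i = u then 1 else 0) - (if i = v then 1 else 0))"

definition edge_laplacian :: "'n::finite \<Rightarrow> 'n \<Rightarrow> real^'n^'n" where
  "edge_laplacian u v = (\<chi> i j. chi_vec u v $ i * chi_vec u v $ j)"

definition PD :: "real^'n \<Rightarrow> real^'n^'n \<Rightarrow> real" where
  "PD s M = s \<bullet> (matrix_inv (mat 1 + M) *v s)"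

definition fj_opinions :: "real^'n^'n \<Rightarrow> real^'n \<Rightarrow> real^'n" where
  "fj_opinions L s = matrix_inv (mat 1 + L) *v s"

end

theory Submission
  imports Defs
begin

lemma inv_right:
  fixes A :: "real^'n^'n"
  assumes "invertible A"
  shows "A *v (matrix_inv A *v x) = x"
proof -
  have "A ** matrix_inv A = mat 1"
    using assms unfolding invertible_def matrix_inv_def
    by (metis (mono_tags, lifting) someI_ex)
  then show ?thesis by (metis matrix_vector_mul_assoc matrix_vector_mul_lid)
qed

lemma lap_quad:
  fixes G :: "'n::finite \<Rightarrow> 'n \<Rightarrow> bool"
  assumes "simple_graph G"
  shows "x \<bullet> (laplacian G *v x) \<ge> 0"
proof -
  have sym: "\<And>i j. G i j \<Longrightarrow> G j i" and irr: "\<And>i. \<not> G i i"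
    using assms unfolding simple_graph_def by auto
  have row: "(laplacian G *v x) $ i = (\<Sum>j\<in>UNIV. if G i j then x$i - x$j else 0)" for i
  proof -
    have "(laplacian G *v x) $ i = (\<Sum>j\<in>UNIV. (if i = j then real (card {k. G i k}) else if G i j then -1 else 0) * x$j)"
      by (simp add: matrix_vector_mult_def laplacian_def)
    also have "\<dots> = (\<Sum>j\<in>UNIV. (if i = j then real (card {k. G i k}) * x$i else 0)) + (\<Sum>j\<in>UNIV. if G i j then - x$j else 0)"
      by (subst sum.distrib[symmetric], rule sum.cong, auto simp: irr)
    also have "\<dots> = real (card {k. G i k}) * x$i + (\<Sum>j\<in>UNIV. if G i j then - x$j else 0)"
      by simp
    also have "(\<Sum>j\<in>UNIV. if G i j then x$i - x$j else 0) = (\<Sum>j\<in>UNIV. if G i j then x$i else 0) + (\<Sum>j\<in>UNIV. if G i j then - x$j else 0)"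
      by (subst sum.distrib[symmetric], rule sum.cong, auto)
    moreover have "(\<Sum>j\<in>UNIV. if G i j then x$i else 0) = real (card {k. G i k}) * x$i"
      by (simp add: sum.If_cases)
    ultimately show ?thesis by simp
  qed
  define Q where "Q = x \<bullet> (laplacian G *v x)"
  have Q1: "Q = (\<Sum>i\<in>UNIV. \<Sum>j\<in>UNIV. if G i j then x$i * (x$i - x$j) else 0)"
    unfolding Q_def inner_vec_def row by (simp add: sum_distrib_left if_distrib cong: if_cong)
  have "Q = (\<Sum>j\<in>UNIV. \<Sum>i\<in>UNIV. if G i j then x$i * (x$i - x$j) else 0)"
    unfolding Q1 by (rule sum.swap)
  also have "\<dots> = (\<Sum>i\<in>UNIV. \<Sum>j\<in>UNIV. if G i j then x$j * (x$j - x$i) else 0)"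
    by (rule sum.cong[OF refl], rule sum.cong[OF refl], auto intro: sym)
  finally have Q2: "Q = \<dots>" .
  have "2 * Q = (\<Sum>i\<in>UNIV. \<Sum>j\<in>UNIV. if G i j then (x$i - x$j)^2 else 0)"
    unfolding mult_2 
    apply (subst (1) Q1, subst Q2)
    apply (simp add: sum.distrib[symmetric])
    apply (rule sum.cong[OF refl], rule sum.cong[OF refl])
    apply (auto simp: power2_eq_square algebra_simps)
    done
  also have "\<dots> \<ge> 0" by (intro sum_nonneg) auto
  finally show ?thesis unfolding Q_def[symmetric] by simp
qed

lemma card_minus1:
  fixes G :: "'n::finite \<Rightarrow> 'n \<Rightarrow> bool"
  assumes "G i k"
  shows "real (card ({j. G i j} - {k})) = real (card {j. G i j}) - 1"
proof -
  have c: "card ({j. G i j} - {k}) = card {j. G i j} - 1"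
    by (rule card_Diff_singleton) (auto simp: assms)
  have "{j. G i j} \<noteq> {}" using assms by auto
  then have "card {j. G i j} > 0" by (simp add: card_gt_0_iff)
  then show ?thesis using c by (simp add: of_nat_diff)
qed

lemma inj_pos:
  fixes M :: "real^'n^'n"
  assumes "\<And>x. x \<bullet> (M *v x) \<ge> x \<bullet> x"
  shows "invertible M"
proof -
  have "inj ((*v) M)"
  proof (rule injI)
    fix x y assume "M *v x = M *v y"
    then have "M *v (x - y) = 0" by (simp add: matrix_vector_mult_diff_distrib)
    then have "(x - y) \<bullet> (x - y) \<le> 0" using assms[of "x - y"] by simp
    then have "(x - y) \<bullet> (x - y) = 0" using inner_ge_zero[of "x - y"] by linarith
    then have "x - y = 0" by (simp only: inner_eq_zero_iff)
    then show "x = y" by simp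
  qed
  then show ?thesis
    using matrix_left_invertible_injective invertible_left_inverse by blast
qed

lemma mat1_quad: "x \<bullet> ((mat 1 + K) *v x) = x \<bullet> x + x \<bullet> (K *v (x::real^'n))"
  by (simp add: matrix_vector_mult_add_rdistrib inner_add_right)

lemma sym_inner:
  fixes M :: "real^'n^'n"
  assumes "transpose M = M"
  shows "x \<bullet> (M *v y) = (M *v x) \<bullet> y"
proof -
  have "x \<bullet> (M *v y) = (x v* M) \<bullet> y" by (simp add: dot_lmul_matrix)
  also have "x v* M = M *v x" using vector_transpose_matrix[of x M] assms by simp
  finally show ?thesis .
qed

theorem mainTheorem6:
  fixes G :: "'n::finite \<Rightarrow> 'n \<Rightarrow> bool" and s :: "real^'n" and u v :: 'n
  assumes "simple_graph G"
    and "(\<Sum>i\<in>UNIV. s $ i) = 0"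
    and "G u v"
  shows "PD s (laplacian G - edge_laplacian u v)
           \<ge> PD s (laplacian G)
              + (fj_opinions (laplacian G) s $ u - fj_opinions (laplacian G) s $ v)^2"
proof -
  have sym: "\<And>i j. G i j \<Longrightarrow> G j i" and irr: "\<And>i. \<not> G i i"
    using assms(1) unfolding simple_graph_def by auto
  have uv: "u \<noteq> v" using irr assms(3) by auto
  define Gp where "Gp = (\<lambda>i j. G i j \<and> \<not> (i = u \<and> j = v) \<and> \<not> (i = v \<and> j = u))"
  have sgp: "simple_graph Gp" unfolding simple_graph_def Gp_def using sym irr by blast
  define L where "L = laplacian G"
  define E where "E = edge_laplacian u v"
  define c where "c = chi_vec u v"
  have hd: "real (card {k. Gp i k}) = real (card {k. G i k}) - (if i = u \<or> i = v then 1 else 0)" for i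
  proof (cases "i = u")
    case True
    have "{k. Gp i k} = {k. G u k} - {v}" using True uv by (auto simp: Gp_def)
    then show ?thesis using card_minus1[of G u v] assms(3) True by simp
  next
    case F1: False
    show ?thesis
    proof (cases "i = v")
      case True
      have "{k. Gp i k} = {k. G v k} - {u}" using True uv by (auto simp: Gp_def)
      then show ?thesis using card_minus1[of G v u] sym[OF assms(3)] True by simp
    next
      case False
      have "{k. Gp i k} = {k. G i k}" using False F1 by (auto simp: Gp_def)
      then show ?thesis using False F1 by simp
    qed
  qed
  have LE: "L - E = laplacian Gp"
  proof (rule vec_eq_iff[THEN iffD2], rule allI, rule vec_eq_iff[THEN iffD2], rule allI)
    fix i j
    have r: "laplacian Gp $ i $ j = (if i = j then real (card {k. G i k}) - (if i = u \<or> i = v then 1 else 0) else if Gp i j then -1 else 0)"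
      unfolding laplacian_def by (simp only: vec_lambda_beta hd)
    show "(L - E) $ i $ j = laplacian Gp $ i $ j"
      unfolding r L_def E_def
      by (cases "i = u"; cases "i = v"; cases "j = u"; cases "j = v")
         (auto simp: laplacian_def edge_laplacian_def chi_vec_def Gp_def uv uv[symmetric] assms(3) sym[OF assms(3)])
  qed
  define A where "A = mat 1 + L"
  define B where "B = mat 1 + (L - E)"
  have Lsym: "L $ i $ j = L $ j $ i" for i j
  proof -
    have "G i j = G j i" using sym by blast
    then show ?thesis unfolding L_def laplacian_def by (cases "i = j") simp_all
  qed
  have tA: "transpose A = A"
  proof (rule vec_eq_iff[THEN iffD2], rule allI, rule vec_eq_iff[THEN iffD2], rule allI)
    fix i j
    have "(mat 1 :: real^'n^'n) $ j $ i = mat 1 $ i $ j" by (simp add: mat_def)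
    then show "transpose A $ i $ j = A $ i $ j"
      unfolding A_def transpose_def using Lsym[of i j] by simp
  qed
  have qA: "x \<bullet> (A *v x) \<ge> x \<bullet> x" for x
    unfolding A_def mat1_quad L_def using lap_quad[OF assms(1)] by simp
  have qL': "x \<bullet> ((L - E) *v x) \<ge> 0" for x
    unfolding LE using lap_quad[OF sgp] by simp
  have qB: "x \<bullet> (B *v x) \<ge> x \<bullet> x" for x
    unfolding B_def mat1_quad using qL' by simp
  have iA: "invertible A" by (rule inj_pos[OF qA])
  have iB: "invertible B" by (rule inj_pos[OF qB])
  have hE: "E *v x = (c \<bullet> x) *\<^sub>R c" for x
  proof (rule vec_eq_iff[THEN iffD2], rule allI)
    fix i
    have "(E *v x) $ i = (\<Sum>j\<in>UNIV. c$i * c$j * x$j)"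
      by (simp add: E_def c_def edge_laplacian_def matrix_vector_mult_def)
    also have "\<dots> = c$i * (\<Sum>j\<in>UNIV. c$j * x$j)"
      by (simp add: sum_distrib_left mult.assoc)
    also have "\<dots> = ((c \<bullet> x) *\<^sub>R c) $ i"
      by (simp add: inner_vec_def mult.commute)
    finally show "(E *v x) $ i = ((c \<bullet> x) *\<^sub>R c) $ i" .
  qed
  have hB: "B *v x = A *v x - (c \<bullet> x) *\<^sub>R c" for x
    unfolding A_def B_def by (simp add: matrix_vector_mult_add_rdistrib matrix_vector_mult_diff_rdistrib hE)
  define z where "z = matrix_inv A *v s"
  define w where "w = matrix_inv B *v s"
  have Az: "A *v z = s" unfolding z_def by (rule inv_right[OF iA])
  have Bw: "B *v w = s" unfolding w_def by (rule inv_right[OF iB])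
  define t where "t = c \<bullet> w"
  define \<delta> where "\<delta> = c \<bullet> z"
  have \<delta>eq: "\<delta> = z $ u - z $ v"
  proof -
    have "\<delta> = (\<Sum>i\<in>UNIV. (if i = u then z $ i else 0) - (if i = v then z $ i else 0))"
      unfolding \<delta>_def c_def chi_vec_def inner_vec_def
      by (rule sum.cong) (auto simp: left_diff_distrib)
    also have "\<dots> = z $ u - z $ v" by (simp add: sum_subtractf)
    finally show ?thesis .
  qed
  define d where "d = w - z"
  have h1: "A *v w - t *\<^sub>R c = s" unfolding t_def hB[of w, symmetric] by (rule Bw)
  have h2: "A *v w = s + t *\<^sub>R c" by (subst h1[symmetric]) simp
  have Ad: "A *v d = t *\<^sub>R c"
    unfolding d_def by (simp add: matrix_vector_mult_diff_distrib Az h2)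
  have sd: "s \<bullet> d = t * \<delta>"
  proof -
    have "s \<bullet> d = (A *v z) \<bullet> d" using Az by simp
    also have "\<dots> = z \<bullet> (A *v d)" using sym_inner[OF tA] by simp
    also have "\<dots> = t * \<delta>" unfolding Ad \<delta>_def by (simp add: inner_commute)
    finally show ?thesis .
  qed
  have cd: "c \<bullet> d = t - \<delta>" unfolding d_def t_def \<delta>_def by (simp add: inner_diff_right)
  have dBd: "d \<bullet> (B *v d) = (t - \<delta>) * \<delta>"
    unfolding hB Ad cd by (simp add: inner_diff_right inner_commute[of d c] cd algebra_simps power2_eq_square)
  have "0 \<le> d \<bullet> (B *v d)" using qB[of d] by (meson inner_ge_zero order_trans)
  then have key: "\<delta>^2 \<le> t * \<delta>" using dBd by (simp add: algebra_simps power2_eq_square)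
  have "s \<bullet> w = s \<bullet> z + s \<bullet> d" unfolding d_def by (simp add: inner_diff_right)
  then show ?thesis
    unfolding PD_def fj_opinions_def
    using key sd \<delta>eq
    by (simp add: A_def B_def L_def E_def z_def w_def)
qed

end
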